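(* Let $\sigma_{\mathbf{X},1},\sigma_{\mathbf{X},2},\sigma_{\mathbf{K},1},\sigma_{\mathbf{K},2}\ge0$, let $\mathbf{I}$ be the $p\times p$ identity matrix, $\delta$ the Kronecker symbol, and consider matrices $\mathbf{X},\mathbf{W}\in\mathbb{R}_{>0}^{p\times m}$ and $\mathbf{K},\mathbf{V}\in\mathbb{R}_{>0}^{n\times p}$. Consider $$F(\mathbf{X}):=\frac{\sigma_{\mathbf{X},1}}{2}\|\mathbf{I}-\mathbf{X}\mathbf{W}^\intercal\|_F^2+\frac{\sigma_{\mathbf{X},2}}{2}\|\mathbf{W}-\mathbf{X}\|_F^2=:G(\mathbf{W}),$$ $$H(\mathbf{K}):=\frac{\sigma_{\mathbf{K},1}}{2}\|\mathbf{I}-\mathbf{V}^\intercal\mathbf{K}\|_F^2+\frac{\sigma_{\mathbf{K},2}}{2}\|\mathbf{V}-\mathbf{K}\|_F^2=:J(\mathbf{V}),$$ where $F$ is viewed as a function of $\mathbf{X}$ ($\mathbf{W}$ fixed), $G$ as a function of $\mathbf{W}$ ($\mathbf{X}$ fixed), $H$ as a function of $\mathbf{K}$ ($\mathbf{V}$ fixed) and $J$ as a function of $\mathbf{V}$ ($\mathbf{K}$ fixed). Then $$Q_F(\mathbf{X},\mathbf{A}):=\frac{\sigma_{\mathbf{X},1}}{2}\sum_{k=1}^p\sum_{\ell=1}^p\frac{1}{(\mathbf{A}\mathbf{W}^\intercal)_{k\ell}}\sum_{j=1}^mA_{kj}W_{\ell j}\Big(\delta_{k\ell}-\frac{X_{kj}}{A_{kj}}(\mathbf{A}\mathbf{W}^\intercal)_{k\ell}\Big)^2+\frac{\sigma_{\mathbf{X},2}}{2}\|\mathbf{W}-\mathbf{X}\|_F^2,$$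 $$Q_G(\mathbf{W},\mathbf{A}):=\frac{\sigma_{\mathbf{X},1}}{2}\sum_{k=1}^p\sum_{\ell=1}^p\frac{1}{(\mathbf{X}\mathbf{A}^\intercal)_{k\ell}}\sum_{j=1}^mX_{kj}A_{\ell j}\Big(\delta_{k\ell}-\frac{W_{\ell j}}{A_{\ell j}}(\mathbf{X}\mathbf{A}^\intercal)_{k\ell}\Big)^2+\frac{\sigma_{\mathbf{X},2}}{2}\|\mathbf{W}-\mathbf{X}\|_F^2,$$ $$Q_H(\mathbf{K},\mathbf{A}):=\frac{\sigma_{\mathbf{K},1}}{2}\sum_{k=1}^p\sum_{\ell=1}^p\frac{1}{(\mathbf{V}^\intercal\mathbf{A})_{k\ell}}\sum_{i=1}^nV_{ik}A_{i\ell}\Big(\delta_{k\ell}-\frac{K_{i\ell}}{A_{i\ell}}(\mathbf{V}^\intercal\mathbf{A})_{k\ell}\Big)^2+\frac{\sigma_{\mathbf{K},2}}{2}\|\mathbf{V}-\mathbf{K}\|_F^2,$$ $$Q_J(\mathbf{V},\mathbf{A}):=\frac{\sigma_{\mathbf{K},1}}{2}\sum_{k=1}^p\sum_{\ell=1}^p\frac{1}{(\mathbf{A}^\intercal\mathbf{K})_{k\ell}}\sum_{i=1}^nA_{ik}K_{i\ell}\Big(\delta_{k\ell}-\frac{V_{ik}}{A_{ik}}(\mathbf{A}^\intercal\mathbf{K})_{k\ell}\Big)^2+\frac{\sigma_{\mathbf{K},2}}{2}\|\mathbf{V}-\mathbf{K}\|_F^2$$ define separable and convex surrogate functionals for $F$,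 $G$, $H$ and $J$, respectively.
   Context: The auxiliary matrices $\mathbf{A}$ have strictly positive entries (of the same size as the first argument). For an open set $\Omega$ and a function $F$ on $\Omega$, a map $Q_F:\Omega\times\Omega\to\mathbb{R}$ is a surrogate functional for $F$ if $Q_F(\mathbf{x},\mathbf{a})\ge F(\mathbf{x})$ for all $\mathbf{x},\mathbf{a}$ and $Q_F(\mathbf{x},\mathbf{x})=F(\mathbf{x})$ for all $\mathbf{x}$. A surrogate is separable if $Q_F(\mathbf{x},\mathbf{a})=\sum_i g_i(x_i,\mathbf{a})$ for some functions $g_i$ (matrix entries playing the role of coordinates). Convexity refers to the first argument. *)

theory Defs
  imports "HOL-Analysis.Analysis"
begin

text \<open>Matrices are rendered as \<open>real^'c^'r\<close> (rows indexed by 'r, columns by 'c),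
  with finite index types standing for arbitrary fixed dimensions.\<close>

definition pos_mat :: "(real^'c^'r) set" where
  "pos_mat = {X. \<forall>i j. X $ i $ j > 0}"

definition frob_norm :: "real^'c^'r \<Rightarrow> real" where
  "frob_norm X = sqrt (\<Sum>i\<in>UNIV. \<Sum>j\<in>UNIV. (X $ i $ j)^2)"

definition kdelta :: "'a \<Rightarrow> 'a \<Rightarrow> real" where
  "kdelta k l = (if k = l then 1 else 0)"

definition is_surrogate :: "'x set \<Rightarrow> ('x \<Rightarrow> real) \<Rightarrow> ('x \<Rightarrow> 'x \<Rightarrow> real) \<Rightarrow> bool" where
  "is_surrogate \<Omega> F Q \<longleftrightarrow> (\<forall>x\<in>\<Omega>. \<forall>a\<in>\<Omega>. Q x a \<ge> F x) \<and> (\<forall>x\<in>\<Omega>. Q x x = F x)"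

definition separable_surrogate ::
  "(real^'c^'r) set \<Rightarrow> (real^'c^'r \<Rightarrow> real^'c^'r \<Rightarrow> real) \<Rightarrow> bool" where
  "separable_surrogate \<Omega> Q \<longleftrightarrow>
     (\<exists>g :: 'r \<Rightarrow> 'c \<Rightarrow> real \<Rightarrow> real^'c^'r \<Rightarrow> real.
        \<forall>x\<in>\<Omega>. \<forall>a\<in>\<Omega>. Q x a = (\<Sum>i\<in>UNIV. \<Sum>j\<in>UNIV. g i j (x $ i $ j) a))"

definition convex_surrogate :: "'x::real_vector set \<Rightarrow> ('x \<Rightarrow> 'x \<Rightarrow> real) \<Rightarrow> bool" where
  "convex_surrogate \<Omega> Q \<longleftrightarrow> (\<forall>a\<in>\<Omega>. convex_on \<Omega> (\<lambda>x. Q x a))"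

definition sep_convex_surrogate ::
  "(real^'c^'r) set \<Rightarrow> (real^'c^'r \<Rightarrow> real) \<Rightarrow> (real^'c^'r \<Rightarrow> real^'c^'r \<Rightarrow> real) \<Rightarrow> bool" where
  "sep_convex_surrogate \<Omega> F Q \<longleftrightarrow>
     is_surrogate \<Omega> F Q \<and> separable_surrogate \<Omega> Q \<and> convex_surrogate \<Omega> Q"

definition F_fun :: "real \<Rightarrow> real \<Rightarrow> real^'m^'p \<Rightarrow> real^'m^'p \<Rightarrow> real" where
  "F_fun s1 s2 W X = s1/2 * (frob_norm (mat 1 - X ** transpose W))^2 + s2/2 * (frob_norm (W - X))^2"

definition G_fun :: "real \<Rightarrow> real \<Rightarrow> real^'m^'p \<Rightarrow> real^'m^'p \<Rightarrow> real" where
  "G_fun s1 s2 X W = s1/2 * (frob_norm (mat 1 - X ** transpose W))^2 + s2/2 * (frob_norm (W - X))^2"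

definition H_fun :: "real \<Rightarrow> real \<Rightarrow> real^'p^'n \<Rightarrow> real^'p^'n \<Rightarrow> real" where
  "H_fun s1 s2 V K = s1/2 * (frob_norm (mat 1 - transpose V ** K))^2 + s2/2 * (frob_norm (V - K))^2"

definition J_fun :: "real \<Rightarrow> real \<Rightarrow> real^'p^'n \<Rightarrow> real^'p^'n \<Rightarrow> real" where
  "J_fun s1 s2 K V = s1/2 * (frob_norm (mat 1 - transpose V ** K))^2 + s2/2 * (frob_norm (V - K))^2"

definition Q_F :: "real \<Rightarrow> real \<Rightarrow> real^'m^'p \<Rightarrow> real^'m^'p \<Rightarrow> real^'m^'p \<Rightarrow> real" where
  "Q_F s1 s2 W X A =
     s1/2 * (\<Sum>k\<in>UNIV. \<Sum>l\<in>UNIV. 1 / (A ** transpose W) $ k $ l *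
        (\<Sum>j\<in>UNIV. A $ k $ j * W $ l $ j *
           (kdelta k l - X $ k $ j / A $ k $ j * (A ** transpose W) $ k $ l)^2))
     + s2/2 * (frob_norm (W - X))^2"

definition Q_G :: "real \<Rightarrow> real \<Rightarrow> real^'m^'p \<Rightarrow> real^'m^'p \<Rightarrow> real^'m^'p \<Rightarrow> real" where
  "Q_G s1 s2 X W A =
     s1/2 * (\<Sum>k\<in>UNIV. \<Sum>l\<in>UNIV. 1 / (X ** transpose A) $ k $ l *
        (\<Sum>j\<in>UNIV. X $ k $ j * A $ l $ j *
           (kdelta k l - W $ l $ j / A $ l $ j * (X ** transpose A) $ k $ l)^2))
     + s2/2 * (frob_norm (W - X))^2"

definition Q_H :: "real \<Rightarrow> real \<Rightarrow> real^'p^'n \<Rightarrow> real^'p^'n \<Rightarrow> real^'p^'n \<Rightarrow> real" where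
  "Q_H s1 s2 V K A =
     s1/2 * (\<Sum>k\<in>UNIV. \<Sum>l\<in>UNIV. 1 / (transpose V ** A) $ k $ l *
        (\<Sum>i\<in>UNIV. V $ i $ k * A $ i $ l *
           (kdelta k l - K $ i $ l / A $ i $ l * (transpose V ** A) $ k $ l)^2))
     + s2/2 * (frob_norm (V - K))^2"

definition Q_J :: "real \<Rightarrow> real \<Rightarrow> real^'p^'n \<Rightarrow> real^'p^'n \<Rightarrow> real^'p^'n \<Rightarrow> real" where
  "Q_J s1 s2 K V A =
     s1/2 * (\<Sum>k\<in>UNIV. \<Sum>l\<in>UNIV. 1 / (transpose A ** K) $ k $ l *
        (\<Sum>i\<in>UNIV. A $ i $ k * K $ i $ l *
           (kdelta k l - V $ i $ k / A $ i $ k * (transpose A ** K) $ k $ l)^2))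
     + s2/2 * (frob_norm (V - K))^2"

end

theory Submission imports Defs begin

lemma convex_on_cong_set:
  assumes "convex_on S f" "\<And>x. x \<in> S \<Longrightarrow> f x = g x"
  shows "convex_on S g"
proof -
  have cS: "convex S" using assms(1) by (simp add: convex_on_def)
  show ?thesis using assms cS unfolding convex_on_def convex_def by auto
qed

lemma convex_on_sum_fun:
  assumes "finite I" "convex S" "\<And>i. i \<in> I \<Longrightarrow> convex_on S (f i)"
  shows "convex_on S (\<lambda>x. \<Sum>i\<in>I. f i x)"
  using assms
proof (induction I rule: finite_induct)
  case empty then show ?case by (simp add: convex_on_const)
next
  case (insert i I)
  then show ?case by (simp add: convex_on_add)
qed

lemma cvx_sq:
  fixes h :: "'a::real_vector \<Rightarrow> real"
  assumes "\<alpha> \<ge> 0" "convex S" "\<And>x y t. h ((1-t) *\<^sub>R x + t *\<^sub>R y) = (1-t) * h x + t * h y"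
  shows "convex_on S (\<lambda>x. \<alpha> * (h x)^2)"
proof (rule convex_onI)
  fix t :: real and x y assume t: "t > 0" "t < 1"
  have e: "(1-t)*(h x)^2 + t*(h y)^2 - ((1-t)*h x + t*h y)^2 = t*(1-t)*(h x - h y)^2"
    by (simp add: power2_eq_square algebra_simps)
  have "0 \<le> t*(1-t)*(h x - h y)^2" using t by simp
  hence "((1-t)*h x + t*h y)^2 \<le> (1-t)*(h x)^2 + t*(h y)^2" using e by linarith
  hence "\<alpha> * ((1-t)*h x + t*h y)^2 \<le> \<alpha> * ((1-t)*(h x)^2 + t*(h y)^2)"
    using assms(1) by (rule mult_left_mono)
  thus "\<alpha> * (h ((1-t) *\<^sub>R x + t *\<^sub>R y))^2 \<le> (1-t) * (\<alpha> * (h x)^2) + t * (\<alpha> * (h y)^2)"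
    unfolding assms(3) by (simp add: algebra_simps)
qed (fact assms(2))

lemma convex_pos_mat: "convex (pos_mat :: (real^'c^'r) set)"
proof (rule convexI)
  fix x y :: "real^'c^'r" and u v :: real
  assume "x \<in> pos_mat" "y \<in> pos_mat" "0 \<le> u" "0 \<le> v" "u + v = 1"
  then show "u *\<^sub>R x + v *\<^sub>R y \<in> pos_mat"
    unfolding pos_mat_def
  proof (clarsimp)
    fix i j
    assume a: "\<forall>i j. 0 < x $ i $ j" "\<forall>i j. 0 < y $ i $ j" "0 \<le> u" "0 \<le> v" "u + v = 1"
    have "0 < x $ i $ j" "0 < y $ i $ j" using a by auto
    then show "0 < u * x $ i $ j + v * y $ i $ j" using a(3-5)
      by (smt (verit) mult_nonneg_nonneg mult_pos_pos)
  qed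
qed

lemma jensen_ab:
  fixes a b x :: "'j \<Rightarrow> real"
  assumes "finite S" "S \<noteq> {}" "\<And>j. j\<in>S \<Longrightarrow> a j > 0" "\<And>j. j\<in>S \<Longrightarrow> b j > 0"
    and c: "c = (\<Sum>j\<in>S. a j * b j)"
  shows "(d - (\<Sum>j\<in>S. x j * b j))^2 \<le> 1/c * (\<Sum>j\<in>S. a j * b j * (d - x j / a j * c)^2)"
proof -
  have cpos: "c > 0" unfolding c using assms by (intro sum_pos) auto
  define w where "w j = a j * b j / c" for j
  define z where "z j = d - x j / a j * c" for j
  have sw: "(\<Sum>j\<in>S. w j) = 1" using cpos by (simp add: w_def sum_divide_distrib[symmetric] c[symmetric])
  have wz: "(\<Sum>j\<in>S. w j * z j) = d - (\<Sum>j\<in>S. x j * b j)"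
  proof -
    have "(\<Sum>j\<in>S. w j * z j) = (\<Sum>j\<in>S. w j * d - x j * b j)"
    proof (rule sum.cong)
      fix j assume "j \<in> S"
      then have "a j > 0" by (rule assms(3))
      then show "w j * z j = w j * d - x j * b j" using cpos
        by (simp add: w_def z_def field_simps)
    qed simp
    also have "\<dots> = d - (\<Sum>j\<in>S. x j * b j)"
      by (simp add: sum_subtractf sum_distrib_right[symmetric] sw)
    finally show ?thesis .
  qed
  have "(\<Sum>j\<in>S. w j *\<^sub>R z j)^2 \<le> (\<Sum>j\<in>S. w j * (z j)^2)"
  proof -
    have nn: "\<And>j. j\<in>S \<Longrightarrow> 0 \<le> w j" unfolding w_def using assms(3,4) cpos
      by (intro divide_nonneg_pos mult_nonneg_nonneg less_imp_le) auto
    show ?thesis using convex_on_sum[OF assms(1,2) convex_power2 sw nn, of z] by simp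
  qed
  moreover have "1/c * (\<Sum>j\<in>S. a j * b j * (d - x j / a j * c)^2) = (\<Sum>j\<in>S. w j * (z j)^2)"
    by (simp add: w_def z_def sum_distrib_left)
  ultimately show ?thesis using wz by simp
qed

lemma jensen_eq:
  fixes a b :: "'j \<Rightarrow> real"
  assumes "finite S" "S \<noteq> {}" "\<And>j. j\<in>S \<Longrightarrow> a j > 0" "\<And>j. j\<in>S \<Longrightarrow> b j > 0"
    and c: "c = (\<Sum>j\<in>S. a j * b j)"
  shows "1/c * (\<Sum>j\<in>S. a j * b j * (d - a j / a j * c)^2) = (d - c)^2"
proof -
  have cpos: "c > 0" unfolding c using assms by (intro sum_pos) auto
  have "(\<Sum>j\<in>S. a j * b j * (d - a j / a j * c)^2) = (\<Sum>j\<in>S. a j * b j * (d - c)^2)"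
    using assms(3) by (intro sum.cong) auto
  also have "\<dots> = c * (d - c)^2" by (simp add: c sum_distrib_right)
  finally show ?thesis using cpos by simp
qed

lemma frob2: "(frob_norm X)^2 = (\<Sum>i\<in>UNIV. \<Sum>j\<in>UNIV. (X $ i $ j)^2)"
  by (simp add: frob_norm_def sum_nonneg)

lemma ent1: "(mat 1 - X ** transpose W) $ k $ l = kdelta k l - (\<Sum>j\<in>UNIV. X$k$j * W$l$j)"
  by (simp add: matrix_matrix_mult_def transpose_def mat_def kdelta_def)
lemma ent2: "(mat 1 - transpose V ** K) $ k $ l = kdelta k l - (\<Sum>i\<in>UNIV. V$i$k * K$i$l)"
  by (simp add: matrix_matrix_mult_def transpose_def mat_def kdelta_def)
lemma ent3: "(A ** transpose W) $ k $ l = (\<Sum>j\<in>UNIV. A$k$j * W$l$j)"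
  by (simp add: matrix_matrix_mult_def transpose_def)
lemma ent4: "(transpose V ** A) $ k $ l = (\<Sum>i\<in>UNIV. V$i$k * A$i$l)"
  by (simp add: matrix_matrix_mult_def transpose_def)


lemma partF:
  fixes W :: "real^'m::finite^'p::finite"
  assumes s1: "s1 \<ge> 0" and s2: "s2 \<ge> 0" and Wp: "W \<in> pos_mat"
  shows "sep_convex_surrogate pos_mat (F_fun s1 s2 W) (Q_F s1 s2 W)"
proof -
  have Wpos: "\<And>i j. W $ i $ j > 0" using Wp by (simp add: pos_mat_def)
  define g :: "'p \<Rightarrow> 'm \<Rightarrow> real \<Rightarrow> real^'m^'p \<Rightarrow> real" where
    "g k j t A = s1/2 * (\<Sum>l\<in>UNIV. (1 / (A ** transpose W) $ k $ l * (A $ k $ j * W $ l $ j)) *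
        (kdelta k l - t / A $ k $ j * (A ** transpose W) $ k $ l)^2)
      + s2/2 * (W $ k $ j - t)^2" for k j t A
  have sep: "Q_F s1 s2 W X A = (\<Sum>k\<in>UNIV. \<Sum>j\<in>UNIV. g k j (X $ k $ j) A)" for X A
  proof -
    have "(\<Sum>k\<in>UNIV. \<Sum>j\<in>UNIV. g k j (X $ k $ j) A) =
      s1/2 * (\<Sum>k\<in>UNIV. \<Sum>j\<in>UNIV. \<Sum>l\<in>UNIV. (1 / (A ** transpose W) $ k $ l * (A $ k $ j * W $ l $ j)) *
        (kdelta k l - X $ k $ j / A $ k $ j * (A ** transpose W) $ k $ l)^2)
      + s2/2 * (\<Sum>k\<in>UNIV. \<Sum>j\<in>UNIV. (W $ k $ j - X $ k $ j)^2)"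
      by (simp add: g_def sum.distrib sum_distrib_left)
    also have "(\<Sum>k\<in>UNIV. \<Sum>j\<in>UNIV. \<Sum>l\<in>UNIV. (1 / (A ** transpose W) $ k $ l * (A $ k $ j * W $ l $ j)) *
        (kdelta k l - X $ k $ j / A $ k $ j * (A ** transpose W) $ k $ l)^2)
      = (\<Sum>k\<in>UNIV. \<Sum>l\<in>UNIV. 1 / (A ** transpose W) $ k $ l *
        (\<Sum>j\<in>UNIV. A $ k $ j * W $ l $ j *
           (kdelta k l - X $ k $ j / A $ k $ j * (A ** transpose W) $ k $ l)^2))"
      by (subst sum.swap) (simp add: sum_distrib_left mult.assoc)
    finally show ?thesis by (simp add: Q_F_def frob2)
  qed
  have surr: "is_surrogate pos_mat (F_fun s1 s2 W) (Q_F s1 s2 W)"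
    unfolding is_surrogate_def
  proof (intro conjI ballI)
    fix X A :: "real^'m^'p" assume X: "X \<in> pos_mat" and A: "A \<in> pos_mat"
    have Xp: "\<And>i j. X $ i $ j > 0" "\<And>i j. A $ i $ j > 0" using X A by (auto simp: pos_mat_def)
    have "(\<Sum>k\<in>UNIV. \<Sum>l\<in>UNIV. (kdelta k l - (\<Sum>j\<in>UNIV. X$k$j * W$l$j))^2) \<le>
      (\<Sum>k\<in>UNIV. \<Sum>l\<in>UNIV. 1 / (A ** transpose W) $ k $ l *
        (\<Sum>j\<in>UNIV. A $ k $ j * W $ l $ j *
           (kdelta k l - X $ k $ j / A $ k $ j * (A ** transpose W) $ k $ l)^2))"
      unfolding ent3
      by (intro sum_mono jensen_ab) (auto simp: Xp Wpos)
    then show "F_fun s1 s2 W X \<le> Q_F s1 s2 W X A"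
      unfolding F_fun_def Q_F_def frob2 ent1 using s1 by (simp add: mult_left_mono)
  next
    fix X :: "real^'m^'p" assume X: "X \<in> pos_mat"
    have Xp: "\<And>i j. X $ i $ j > 0" using X by (auto simp: pos_mat_def)
    have "(\<Sum>k\<in>UNIV. \<Sum>l\<in>UNIV. 1 / (X ** transpose W) $ k $ l *
        (\<Sum>j\<in>UNIV. X $ k $ j * W $ l $ j *
           (kdelta k l - X $ k $ j / X $ k $ j * (X ** transpose W) $ k $ l)^2))
       = (\<Sum>k\<in>UNIV. \<Sum>l\<in>UNIV. (kdelta k l - (\<Sum>j\<in>UNIV. X$k$j * W$l$j))^2)"
      unfolding ent3
      by (intro sum.cong refl jensen_eq) (auto simp: Xp Wpos)
    then show "Q_F s1 s2 W X X = F_fun s1 s2 W X"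
      unfolding F_fun_def Q_F_def frob2 ent1 by simp
  qed
  have cvx: "convex_surrogate pos_mat (Q_F s1 s2 W)"
    unfolding convex_surrogate_def
  proof
    fix A :: "real^'m^'p" assume A: "A \<in> pos_mat"
    have Ap: "\<And>i j. A $ i $ j > 0" using A by (auto simp: pos_mat_def)
    have cpos: "(A ** transpose W) $ k $ l > 0" for k l
      unfolding ent3 by (intro sum_pos) (auto simp: Ap Wpos intro: mult_pos_pos)
    have "convex_on pos_mat (\<lambda>X. \<Sum>k\<in>UNIV. \<Sum>j\<in>UNIV. g k j (X $ k $ j) A)"
      unfolding g_def
      apply (intro convex_on_sum_fun convex_on_add cvx_sq convex_on_cmul convex_pos_mat finite)
      using s1 s2 cpos Ap Wpos
      by (auto simp: field_simps less_imp_le Ap[THEN less_imp_neq, symmetric])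
    then show "convex_on pos_mat (\<lambda>X. Q_F s1 s2 W X A)"
      by (rule convex_on_cong_set) (simp add: sep)
  qed
  show ?thesis unfolding sep_convex_surrogate_def separable_surrogate_def
    using surr cvx sep by blast
qed


lemma jensen_ba:
  fixes a b x :: "'j \<Rightarrow> real"
  assumes "finite S" "S \<noteq> {}" "\<And>j. j\<in>S \<Longrightarrow> a j > 0" "\<And>j. j\<in>S \<Longrightarrow> b j > 0"
    and c: "c = (\<Sum>j\<in>S. b j * a j)"
  shows "(d - (\<Sum>j\<in>S. b j * x j))^2 \<le> 1/c * (\<Sum>j\<in>S. b j * a j * (d - x j / a j * c)^2)"
proof -
  have c': "c = (\<Sum>j\<in>S. a j * b j)" using c by (simp add: mult.commute)
  have "(d - (\<Sum>j\<in>S. x j * b j))^2 \<le> 1/c * (\<Sum>j\<in>S. a j * b j * (d - x j / a j * c)^2)"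
    by (rule jensen_ab[OF assms(1-4) c'])
  then show ?thesis by (simp add: mult.commute)
qed

lemma jensen_eq_ba:
  fixes a b :: "'j \<Rightarrow> real"
  assumes "finite S" "S \<noteq> {}" "\<And>j. j\<in>S \<Longrightarrow> a j > 0" "\<And>j. j\<in>S \<Longrightarrow> b j > 0"
    and c: "c = (\<Sum>j\<in>S. b j * a j)"
  shows "1/c * (\<Sum>j\<in>S. b j * a j * (d - a j / a j * c)^2) = (d - c)^2"
proof -
  have c': "c = (\<Sum>j\<in>S. a j * b j)" using c by (simp add: mult.commute)
  have "1/c * (\<Sum>j\<in>S. a j * b j * (d - a j / a j * c)^2) = (d - c)^2"
    by (rule jensen_eq[OF assms(1-4) c'])
  then show ?thesis by (simp add: mult.commute)
qed

lemma perm_inner: "(\<Sum>a\<in>A. \<Sum>b\<in>B. \<Sum>c\<in>C. f a b c) = (\<Sum>a\<in>A. \<Sum>c\<in>C. \<Sum>b\<in>B. f a b c)"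
  by (rule sum.cong[OF refl], rule sum.swap)

lemma partG:
  fixes X :: "real^'m::finite^'p::finite"
  assumes s1: "s1 \<ge> 0" and s2: "s2 \<ge> 0" and Xp0: "X \<in> pos_mat"
  shows "sep_convex_surrogate pos_mat (G_fun s1 s2 X) (Q_G s1 s2 X)"
proof -
  have Xpos: "\<And>i j. X $ i $ j > 0" using Xp0 by (simp add: pos_mat_def)
  define g :: "'p \<Rightarrow> 'm \<Rightarrow> real \<Rightarrow> real^'m^'p \<Rightarrow> real" where
    "g l j t A = s1/2 * (\<Sum>k\<in>UNIV. (1 / (X ** transpose A) $ k $ l * (X $ k $ j * A $ l $ j)) *
        (kdelta k l - t / A $ l $ j * (X ** transpose A) $ k $ l)^2)
      + s2/2 * (t - X $ l $ j)^2" for l j t A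
  have sep: "Q_G s1 s2 X W A = (\<Sum>l\<in>UNIV. \<Sum>j\<in>UNIV. g l j (W $ l $ j) A)" for W A
  proof -
    have "(\<Sum>l\<in>UNIV. \<Sum>j\<in>UNIV. g l j (W $ l $ j) A) =
      s1/2 * (\<Sum>l\<in>UNIV. \<Sum>j\<in>UNIV. \<Sum>k\<in>UNIV. (1 / (X ** transpose A) $ k $ l * (X $ k $ j * A $ l $ j)) *
        (kdelta k l - W $ l $ j / A $ l $ j * (X ** transpose A) $ k $ l)^2)
      + s2/2 * (\<Sum>l\<in>UNIV. \<Sum>j\<in>UNIV. (W $ l $ j - X $ l $ j)^2)"
      by (simp add: g_def sum.distrib sum_distrib_left)
    also have "(\<Sum>l\<in>UNIV. \<Sum>j\<in>UNIV. \<Sum>k\<in>UNIV. (1 / (X ** transpose A) $ k $ l * (X $ k $ j * A $ l $ j)) *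
        (kdelta k l - W $ l $ j / A $ l $ j * (X ** transpose A) $ k $ l)^2)
      = (\<Sum>k\<in>UNIV. \<Sum>l\<in>UNIV. \<Sum>j\<in>UNIV. (1 / (X ** transpose A) $ k $ l * (X $ k $ j * A $ l $ j)) *
        (kdelta k l - W $ l $ j / A $ l $ j * (X ** transpose A) $ k $ l)^2)"
      by (subst perm_inner) (rule sum.swap)
    also have "\<dots> = (\<Sum>k\<in>UNIV. \<Sum>l\<in>UNIV. 1 / (X ** transpose A) $ k $ l *
        (\<Sum>j\<in>UNIV. X $ k $ j * A $ l $ j *
           (kdelta k l - W $ l $ j / A $ l $ j * (X ** transpose A) $ k $ l)^2))"
      by (simp add: sum_distrib_left mult.assoc)
    finally show ?thesis by (simp add: Q_G_def frob2)
  qed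
  have surr: "is_surrogate pos_mat (G_fun s1 s2 X) (Q_G s1 s2 X)"
    unfolding is_surrogate_def
  proof (intro conjI ballI)
    fix W A :: "real^'m^'p" assume W: "W \<in> pos_mat" and A: "A \<in> pos_mat"
    have Wp: "\<And>i j. W $ i $ j > 0" "\<And>i j. A $ i $ j > 0" using W A by (auto simp: pos_mat_def)
    have "(\<Sum>k\<in>UNIV. \<Sum>l\<in>UNIV. (kdelta k l - (\<Sum>j\<in>UNIV. X$k$j * W$l$j))^2) \<le>
      (\<Sum>k\<in>UNIV. \<Sum>l\<in>UNIV. 1 / (X ** transpose A) $ k $ l *
        (\<Sum>j\<in>UNIV. X $ k $ j * A $ l $ j *
           (kdelta k l - W $ l $ j / A $ l $ j * (X ** transpose A) $ k $ l)^2))"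
      unfolding ent3
      by (intro sum_mono jensen_ba) (auto simp: Wp Xpos)
    then show "G_fun s1 s2 X W \<le> Q_G s1 s2 X W A"
      unfolding G_fun_def Q_G_def frob2 ent1 using s1 by (simp add: mult_left_mono)
  next
    fix W :: "real^'m^'p" assume W: "W \<in> pos_mat"
    have Wp: "\<And>i j. W $ i $ j > 0" using W by (auto simp: pos_mat_def)
    have "(\<Sum>k\<in>UNIV. \<Sum>l\<in>UNIV. 1 / (X ** transpose W) $ k $ l *
        (\<Sum>j\<in>UNIV. X $ k $ j * W $ l $ j *
           (kdelta k l - W $ l $ j / W $ l $ j * (X ** transpose W) $ k $ l)^2))
       = (\<Sum>k\<in>UNIV. \<Sum>l\<in>UNIV. (kdelta k l - (\<Sum>j\<in>UNIV. X$k$j * W$l$j))^2)"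
      unfolding ent3
      by (intro sum.cong refl jensen_eq_ba) (auto simp: Wp Xpos)
    then show "Q_G s1 s2 X W W = G_fun s1 s2 X W"
      unfolding G_fun_def Q_G_def frob2 ent1 by simp
  qed
  have cvx: "convex_surrogate pos_mat (Q_G s1 s2 X)"
    unfolding convex_surrogate_def
  proof
    fix A :: "real^'m^'p" assume A: "A \<in> pos_mat"
    have Ap: "\<And>i j. A $ i $ j > 0" using A by (auto simp: pos_mat_def)
    have cpos: "(X ** transpose A) $ k $ l > 0" for k l
      unfolding ent3 by (intro sum_pos) (auto simp: Ap Xpos intro: mult_pos_pos)
    have "convex_on pos_mat (\<lambda>W. \<Sum>l\<in>UNIV. \<Sum>j\<in>UNIV. g l j (W $ l $ j) A)"
      unfolding g_def
      apply (intro convex_on_sum_fun convex_on_add cvx_sq convex_on_cmul convex_pos_mat finite)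
      using s1 s2 cpos Ap Xpos
      by (auto simp: field_simps less_imp_le Ap[THEN less_imp_neq, symmetric])
    then show "convex_on pos_mat (\<lambda>W. Q_G s1 s2 X W A)"
      by (rule convex_on_cong_set) (simp add: sep)
  qed
  show ?thesis unfolding sep_convex_surrogate_def separable_surrogate_def
    using surr cvx sep by blast
qed

lemma partH:
  fixes V :: "real^'p::finite^'n::finite"
  assumes s1: "s1 \<ge> 0" and s2: "s2 \<ge> 0" and Vp0: "V \<in> pos_mat"
  shows "sep_convex_surrogate pos_mat (H_fun s1 s2 V) (Q_H s1 s2 V)"
proof -
  have Vpos: "\<And>i j. V $ i $ j > 0" using Vp0 by (simp add: pos_mat_def)
  define g :: "'n \<Rightarrow> 'p \<Rightarrow> real \<Rightarrow> real^'p^'n \<Rightarrow> real" where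
    "g i l t A = s1/2 * (\<Sum>k\<in>UNIV. (1 / (transpose V ** A) $ k $ l * (V $ i $ k * A $ i $ l)) *
        (kdelta k l - t / A $ i $ l * (transpose V ** A) $ k $ l)^2)
      + s2/2 * (V $ i $ l - t)^2" for i l t A
  have sep: "Q_H s1 s2 V K A = (\<Sum>i\<in>UNIV. \<Sum>l\<in>UNIV. g i l (K $ i $ l) A)" for K A
  proof -
    have "(\<Sum>i\<in>UNIV. \<Sum>l\<in>UNIV. g i l (K $ i $ l) A) =
      s1/2 * (\<Sum>i\<in>UNIV. \<Sum>l\<in>UNIV. \<Sum>k\<in>UNIV. (1 / (transpose V ** A) $ k $ l * (V $ i $ k * A $ i $ l)) *
        (kdelta k l - K $ i $ l / A $ i $ l * (transpose V ** A) $ k $ l)^2)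
      + s2/2 * (\<Sum>i\<in>UNIV. \<Sum>l\<in>UNIV. (V $ i $ l - K $ i $ l)^2)"
      by (simp add: g_def sum.distrib sum_distrib_left)
    also have "(\<Sum>i\<in>UNIV. \<Sum>l\<in>UNIV. \<Sum>k\<in>UNIV. (1 / (transpose V ** A) $ k $ l * (V $ i $ k * A $ i $ l)) *
        (kdelta k l - K $ i $ l / A $ i $ l * (transpose V ** A) $ k $ l)^2)
      = (\<Sum>k\<in>UNIV. \<Sum>l\<in>UNIV. \<Sum>i\<in>UNIV. (1 / (transpose V ** A) $ k $ l * (V $ i $ k * A $ i $ l)) *
        (kdelta k l - K $ i $ l / A $ i $ l * (transpose V ** A) $ k $ l)^2)"
      by (subst sum.swap, subst perm_inner, rule sum.swap)
    also have "\<dots> = (\<Sum>k\<in>UNIV. \<Sum>l\<in>UNIV. 1 / (transpose V ** A) $ k $ l *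
        (\<Sum>i\<in>UNIV. V $ i $ k * A $ i $ l *
           (kdelta k l - K $ i $ l / A $ i $ l * (transpose V ** A) $ k $ l)^2))"
      by (simp add: sum_distrib_left mult.assoc)
    finally show ?thesis by (simp add: Q_H_def frob2)
  qed
  have surr: "is_surrogate pos_mat (H_fun s1 s2 V) (Q_H s1 s2 V)"
    unfolding is_surrogate_def
  proof (intro conjI ballI)
    fix K A :: "real^'p^'n" assume K: "K \<in> pos_mat" and A: "A \<in> pos_mat"
    have Kp: "\<And>i j. K $ i $ j > 0" "\<And>i j. A $ i $ j > 0" using K A by (auto simp: pos_mat_def)
    have "(\<Sum>k\<in>UNIV. \<Sum>l\<in>UNIV. (kdelta k l - (\<Sum>i\<in>UNIV. V$i$k * K$i$l))^2) \<le>
      (\<Sum>k\<in>UNIV. \<Sum>l\<in>UNIV. 1 / (transpose V ** A) $ k $ l *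
        (\<Sum>i\<in>UNIV. V $ i $ k * A $ i $ l *
           (kdelta k l - K $ i $ l / A $ i $ l * (transpose V ** A) $ k $ l)^2))"
      unfolding ent4
      by (intro sum_mono jensen_ba) (auto simp: Kp Vpos)
    then show "H_fun s1 s2 V K \<le> Q_H s1 s2 V K A"
      unfolding H_fun_def Q_H_def frob2 ent2 using s1 by (simp add: mult_left_mono)
  next
    fix K :: "real^'p^'n" assume K: "K \<in> pos_mat"
    have Kp: "\<And>i j. K $ i $ j > 0" using K by (auto simp: pos_mat_def)
    have "(\<Sum>k\<in>UNIV. \<Sum>l\<in>UNIV. 1 / (transpose V ** K) $ k $ l *
        (\<Sum>i\<in>UNIV. V $ i $ k * K $ i $ l *
           (kdelta k l - K $ i $ l / K $ i $ l * (transpose V ** K) $ k $ l)^2))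
       = (\<Sum>k\<in>UNIV. \<Sum>l\<in>UNIV. (kdelta k l - (\<Sum>i\<in>UNIV. V$i$k * K$i$l))^2)"
      unfolding ent4
      by (intro sum.cong refl jensen_eq_ba) (auto simp: Kp Vpos)
    then show "Q_H s1 s2 V K K = H_fun s1 s2 V K"
      unfolding H_fun_def Q_H_def frob2 ent2 by simp
  qed
  have cvx: "convex_surrogate pos_mat (Q_H s1 s2 V)"
    unfolding convex_surrogate_def
  proof
    fix A :: "real^'p^'n" assume A: "A \<in> pos_mat"
    have Ap: "\<And>i j. A $ i $ j > 0" using A by (auto simp: pos_mat_def)
    have cpos: "(transpose V ** A) $ k $ l > 0" for k l
      unfolding ent4 by (intro sum_pos) (auto simp: Ap Vpos intro: mult_pos_pos)
    have "convex_on pos_mat (\<lambda>K. \<Sum>i\<in>UNIV. \<Sum>l\<in>UNIV. g i l (K $ i $ l) A)"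
      unfolding g_def
      apply (intro convex_on_sum_fun convex_on_add cvx_sq convex_on_cmul convex_pos_mat finite)
      using s1 s2 cpos Ap Vpos
      by (auto simp: field_simps less_imp_le Ap[THEN less_imp_neq, symmetric])
    then show "convex_on pos_mat (\<lambda>K. Q_H s1 s2 V K A)"
      by (rule convex_on_cong_set) (simp add: sep)
  qed
  show ?thesis unfolding sep_convex_surrogate_def separable_surrogate_def
    using surr cvx sep by blast
qed

lemma partJ:
  fixes K :: "real^'p::finite^'n::finite"
  assumes s1: "s1 \<ge> 0" and s2: "s2 \<ge> 0" and Kp0: "K \<in> pos_mat"
  shows "sep_convex_surrogate pos_mat (J_fun s1 s2 K) (Q_J s1 s2 K)"
proof -
  have Kpos: "\<And>i j. K $ i $ j > 0" using Kp0 by (simp add: pos_mat_def)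
  define g :: "'n \<Rightarrow> 'p \<Rightarrow> real \<Rightarrow> real^'p^'n \<Rightarrow> real" where
    "g i k t A = s1/2 * (\<Sum>l\<in>UNIV. (1 / (transpose A ** K) $ k $ l * (A $ i $ k * K $ i $ l)) *
        (kdelta k l - t / A $ i $ k * (transpose A ** K) $ k $ l)^2)
      + s2/2 * (t - K $ i $ k)^2" for i k t A
  have sep: "Q_J s1 s2 K V A = (\<Sum>i\<in>UNIV. \<Sum>k\<in>UNIV. g i k (V $ i $ k) A)" for V A
  proof -
    have "(\<Sum>i\<in>UNIV. \<Sum>k\<in>UNIV. g i k (V $ i $ k) A) =
      s1/2 * (\<Sum>i\<in>UNIV. \<Sum>k\<in>UNIV. \<Sum>l\<in>UNIV. (1 / (transpose A ** K) $ k $ l * (A $ i $ k * K $ i $ l)) *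
        (kdelta k l - V $ i $ k / A $ i $ k * (transpose A ** K) $ k $ l)^2)
      + s2/2 * (\<Sum>i\<in>UNIV. \<Sum>k\<in>UNIV. (V $ i $ k - K $ i $ k)^2)"
      by (simp add: g_def sum.distrib sum_distrib_left)
    also have "(\<Sum>i\<in>UNIV. \<Sum>k\<in>UNIV. \<Sum>l\<in>UNIV. (1 / (transpose A ** K) $ k $ l * (A $ i $ k * K $ i $ l)) *
        (kdelta k l - V $ i $ k / A $ i $ k * (transpose A ** K) $ k $ l)^2)
      = (\<Sum>k\<in>UNIV. \<Sum>l\<in>UNIV. \<Sum>i\<in>UNIV. (1 / (transpose A ** K) $ k $ l * (A $ i $ k * K $ i $ l)) *
        (kdelta k l - V $ i $ k / A $ i $ k * (transpose A ** K) $ k $ l)^2)"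
      by (subst sum.swap, rule perm_inner)
    also have "\<dots> = (\<Sum>k\<in>UNIV. \<Sum>l\<in>UNIV. 1 / (transpose A ** K) $ k $ l *
        (\<Sum>i\<in>UNIV. A $ i $ k * K $ i $ l *
           (kdelta k l - V $ i $ k / A $ i $ k * (transpose A ** K) $ k $ l)^2))"
      by (simp add: sum_distrib_left mult.assoc)
    finally show ?thesis by (simp add: Q_J_def frob2)
  qed
  have surr: "is_surrogate pos_mat (J_fun s1 s2 K) (Q_J s1 s2 K)"
    unfolding is_surrogate_def
  proof (intro conjI ballI)
    fix V A :: "real^'p^'n" assume V: "V \<in> pos_mat" and A: "A \<in> pos_mat"
    have Vp: "\<And>i j. V $ i $ j > 0" "\<And>i j. A $ i $ j > 0" using V A by (auto simp: pos_mat_def)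
    have "(\<Sum>k\<in>UNIV. \<Sum>l\<in>UNIV. (kdelta k l - (\<Sum>i\<in>UNIV. V$i$k * K$i$l))^2) \<le>
      (\<Sum>k\<in>UNIV. \<Sum>l\<in>UNIV. 1 / (transpose A ** K) $ k $ l *
        (\<Sum>i\<in>UNIV. A $ i $ k * K $ i $ l *
           (kdelta k l - V $ i $ k / A $ i $ k * (transpose A ** K) $ k $ l)^2))"
      unfolding ent4
      by (intro sum_mono jensen_ab) (auto simp: Vp Kpos)
    then show "J_fun s1 s2 K V \<le> Q_J s1 s2 K V A"
      unfolding J_fun_def Q_J_def frob2 ent2 using s1 by (simp add: mult_left_mono)
  next
    fix V :: "real^'p^'n" assume V: "V \<in> pos_mat"
    have Vp: "\<And>i j. V $ i $ j > 0" using V by (auto simp: pos_mat_def)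
    have "(\<Sum>k\<in>UNIV. \<Sum>l\<in>UNIV. 1 / (transpose V ** K) $ k $ l *
        (\<Sum>i\<in>UNIV. V $ i $ k * K $ i $ l *
           (kdelta k l - V $ i $ k / V $ i $ k * (transpose V ** K) $ k $ l)^2))
       = (\<Sum>k\<in>UNIV. \<Sum>l\<in>UNIV. (kdelta k l - (\<Sum>i\<in>UNIV. V$i$k * K$i$l))^2)"
      unfolding ent4
      by (intro sum.cong refl jensen_eq) (auto simp: Vp Kpos)
    then show "Q_J s1 s2 K V V = J_fun s1 s2 K V"
      unfolding J_fun_def Q_J_def frob2 ent2 by simp
  qed
  have cvx: "convex_surrogate pos_mat (Q_J s1 s2 K)"
    unfolding convex_surrogate_def
  proof
    fix A :: "real^'p^'n" assume A: "A \<in> pos_mat"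
    have Ap: "\<And>i j. A $ i $ j > 0" using A by (auto simp: pos_mat_def)
    have cpos: "(transpose A ** K) $ k $ l > 0" for k l
      unfolding ent4 by (intro sum_pos) (auto simp: Ap Kpos intro: mult_pos_pos)
    have "convex_on pos_mat (\<lambda>V. \<Sum>i\<in>UNIV. \<Sum>k\<in>UNIV. g i k (V $ i $ k) A)"
      unfolding g_def
      apply (intro convex_on_sum_fun convex_on_add cvx_sq convex_on_cmul convex_pos_mat finite)
      using s1 s2 cpos Ap Kpos
      by (auto simp: field_simps less_imp_le Ap[THEN less_imp_neq, symmetric])
    then show "convex_on pos_mat (\<lambda>V. Q_J s1 s2 K V A)"
      by (rule convex_on_cong_set) (simp add: sep)
  qed
  show ?thesis unfolding sep_convex_surrogate_def separable_surrogate_def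
    using surr cvx sep by blast
qed

theorem theorem4:
  fixes sX1 sX2 sK1 sK2 :: real
    and X W :: "real^'m::finite^'p::finite"
    and K V :: "real^'p^'n::finite"
  assumes "sX1 \<ge> 0" "sX2 \<ge> 0" "sK1 \<ge> 0" "sK2 \<ge> 0"
    and "X \<in> pos_mat" "W \<in> pos_mat" "K \<in> pos_mat" "V \<in> pos_mat"
  shows "sep_convex_surrogate pos_mat (F_fun sX1 sX2 W) (Q_F sX1 sX2 W)
       \<and> sep_convex_surrogate pos_mat (G_fun sX1 sX2 X) (Q_G sX1 sX2 X)
       \<and> sep_convex_surrogate pos_mat (H_fun sK1 sK2 V) (Q_H sK1 sK2 V)
       \<and> sep_convex_surrogate pos_mat (J_fun sK1 sK2 K) (Q_J sK1 sK2 K)"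
  using partF[OF assms(1,2,6)] partG[OF assms(1,2,5)] partH[OF assms(3,4,8)] partJ[OF assms(3,4,7)]
  by blast

end
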